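(* Let $N\ge 2$, $a\in\mathbb{R}$, and let $P\in\mathbb{R}^{N\times N}$ be a symmetric, doubly stochastic matrix with nonnegative entries whose eigenvalues satisfy $-1<\lambda_N(P)\le\dots\le\lambda_2(P)<\lambda_1(P)=1$. Consider the state $x_{t+1}=ax_t+r_t$ and observations $y_{i,t}=x_t+w_{i,t}$, where the innovations $r_t$ and observation noises $w_{i,t}$ have zero mean, and for a signal weight $\alpha\in(0,1]$ the estimates $$\hat{x}_{i,t+1}=a\Big(\sum_{j=1}^N p_{ij}\hat{x}_{j,t}+\alpha(y_{i,t}-\hat{x}_{i,t})\Big),\qquad \tilde{x}_{i,t+1}=a\Big(\sum_{j=1}^N p_{ij}\tilde{x}_{j,t}+\alpha\Big(\sum_{j=1}^N p_{ij}y_{j,t}-\tilde{x}_{i,t}\Big)\Big).$$ Call the estimates asymptotically unbiased for $\alpha$ if, for every choice of initial estimates, $\mathbb{E}[\hat{x}_{i,t}-x_t]\to 0$ and $\mathbb{E}[\tilde{x}_{i,t}-x_t]\to0$ as $t\to\infty$ for all $i$ (equivalently, the spectral radius of $a(P-\alpha I_N)$ is less than $1$). Then there exists $\alpha\in(0,1]$ for which the estimates are asymptotically unbiased if and only if $$|a|<\frac{2}{1-\lambda_N(P)}.$$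
   Context: $a$ is the (known) rate of change of the state; $x_0$ is a random initial state with finite mean. *)

theory Defs
  imports "HOL-Probability.Probability"
begin

text \<open>Matrix notions. Matrices are indexed by a finite type 'n with N = CARD('n).\<close>

definition symmetric_matrix :: "real^'n^'n \<Rightarrow> bool" where
  "symmetric_matrix P \<longleftrightarrow> transpose P = P"

definition doubly_stochastic :: "real^'n::finite^'n \<Rightarrow> bool" where
  "doubly_stochastic P \<longleftrightarrow>
     (\<forall>i j. P $ i $ j \<ge> 0) \<and> (\<forall>i. (\<Sum>j\<in>UNIV. P $ i $ j) = 1) \<and> (\<forall>j. (\<Sum>i\<in>UNIV. P $ i $ j) = 1)"

definition eigenvalues :: "real^'n::finite^'n \<Rightarrow> real set" where
  "eigenvalues P = {e. \<exists>v. v \<noteq> 0 \<and> P *v v = e *\<^sub>R v}"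

definition lambda_min :: "real^'n::finite^'n \<Rightarrow> real" where
  "lambda_min P = Min (eigenvalues P)"

text \<open>Eigenvalue condition  -1 < lambda_N <= ... <= lambda_2 < lambda_1 = 1
  (for symmetric P, multiplicity = dimension of the eigenspace).\<close>
definition spectral_condition :: "real^'n::finite^'n \<Rightarrow> bool" where
  "spectral_condition P \<longleftrightarrow>
     1 \<in> eigenvalues P \<and> (\<forall>e\<in>eigenvalues P. -1 < e \<and> e \<le> 1)
     \<and> dim {v. P *v v = v} = 1"

primrec state :: "real \<Rightarrow> ('w \<Rightarrow> real) \<Rightarrow> (nat \<Rightarrow> 'w \<Rightarrow> real) \<Rightarrow> nat \<Rightarrow> 'w \<Rightarrow> real" where
  "state a x0 r 0 = x0"
| "state a x0 r (Suc t) = (\<lambda>\<omega>. a * state a x0 r t \<omega> + r t \<omega>)"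

definition obs :: "real \<Rightarrow> ('w \<Rightarrow> real) \<Rightarrow> (nat \<Rightarrow> 'w \<Rightarrow> real) \<Rightarrow> ('n \<Rightarrow> nat \<Rightarrow> 'w \<Rightarrow> real)
    \<Rightarrow> 'n \<Rightarrow> nat \<Rightarrow> 'w \<Rightarrow> real" where
  "obs a x0 r w i t \<omega> = state a x0 r t \<omega> + w i t \<omega>"

primrec est_hat :: "real^'n::finite^'n \<Rightarrow> real \<Rightarrow> real \<Rightarrow> ('w \<Rightarrow> real) \<Rightarrow> (nat \<Rightarrow> 'w \<Rightarrow> real)
    \<Rightarrow> ('n \<Rightarrow> nat \<Rightarrow> 'w \<Rightarrow> real) \<Rightarrow> ('w \<Rightarrow> real^'n) \<Rightarrow> nat \<Rightarrow> 'w \<Rightarrow> real^'n" where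
  "est_hat P a \<alpha> x0 r w c 0 = c"
| "est_hat P a \<alpha> x0 r w c (Suc t) = (\<lambda>\<omega>. \<chi> i.
     a * ((\<Sum>j\<in>UNIV. P $ i $ j * est_hat P a \<alpha> x0 r w c t \<omega> $ j)
          + \<alpha> * (obs a x0 r w i t \<omega> - est_hat P a \<alpha> x0 r w c t \<omega> $ i)))"

primrec est_tilde :: "real^'n::finite^'n \<Rightarrow> real \<Rightarrow> real \<Rightarrow> ('w \<Rightarrow> real) \<Rightarrow> (nat \<Rightarrow> 'w \<Rightarrow> real)
    \<Rightarrow> ('n \<Rightarrow> nat \<Rightarrow> 'w \<Rightarrow> real) \<Rightarrow> ('w \<Rightarrow> real^'n) \<Rightarrow> nat \<Rightarrow> 'w \<Rightarrow> real^'n" where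
  "est_tilde P a \<alpha> x0 r w c 0 = c"
| "est_tilde P a \<alpha> x0 r w c (Suc t) = (\<lambda>\<omega>. \<chi> i.
     a * ((\<Sum>j\<in>UNIV. P $ i $ j * est_tilde P a \<alpha> x0 r w c t \<omega> $ j)
          + \<alpha> * ((\<Sum>j\<in>UNIV. P $ i $ j * obs a x0 r w j t \<omega>) - est_tilde P a \<alpha> x0 r w c t \<omega> $ i)))"

definition asymp_unbiased :: "'w measure \<Rightarrow> real^'n::finite^'n \<Rightarrow> real \<Rightarrow> ('w \<Rightarrow> real)
    \<Rightarrow> (nat \<Rightarrow> 'w \<Rightarrow> real) \<Rightarrow> ('n \<Rightarrow> nat \<Rightarrow> 'w \<Rightarrow> real) \<Rightarrow> real \<Rightarrow> bool" where
  "asymp_unbiased M P a x0 r w \<alpha> \<longleftrightarrow>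
     (\<forall>c. (\<forall>i. integrable M (\<lambda>\<omega>. c \<omega> $ i)) \<longrightarrow>
        (\<forall>i. ((\<lambda>t. integral\<^sup>L M (\<lambda>\<omega>. est_hat P a \<alpha> x0 r w c t \<omega> $ i - state a x0 r t \<omega>))
                \<longlonglongrightarrow> 0)
           \<and> ((\<lambda>t. integral\<^sup>L M (\<lambda>\<omega>. est_tilde P a \<alpha> x0 r w c t \<omega> $ i - state a x0 r t \<omega>))
                \<longlonglongrightarrow> 0)))"

end

theory Submission imports Defs begin

lemma rayleigh_min:
  fixes f :: "'a::euclidean_space \<Rightarrow> 'a"
  assumes lin: "linear f" and sa: "\<And>x y. inner x (f y) = inner (f x) y"
  shows "\<exists>e v. v \<noteq> 0 \<and> f v = e *\<^sub>R v \<and> (\<forall>x. e * (x \<bullet> x) \<le> x \<bullet> f x)"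
proof -
  have c1: "compact (sphere (0::'a) 1)" by simp
  obtain b :: 'a where "b \<in> Basis" using nonempty_Basis by blast
  then have "b \<in> sphere 0 1" by simp
  then have c2: "sphere (0::'a) 1 \<noteq> {}" by blast
  have c3: "continuous_on (sphere 0 1) (\<lambda>x. x \<bullet> f x)"
  proof -
    have bl: "bounded_linear f" using lin linear_conv_bounded_linear by auto
    show ?thesis by (rule continuous_on_inner[OF continuous_on_id linear_continuous_on[OF bl]])
  qed
  have "\<exists>x\<in>sphere 0 1. \<forall>y\<in>sphere 0 1. x \<bullet> f x \<le> y \<bullet> f y"
    by (rule continuous_attains_inf[OF c1 c2 c3])
  then obtain x0 where x0: "x0 \<in> sphere 0 1" "\<And>y. y \<in> sphere 0 1 \<Longrightarrow> x0 \<bullet> f x0 \<le> y \<bullet> f y"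
    by blast
  define e where "e = x0 \<bullet> f x0"
  have x0n: "x0 \<bullet> x0 = 1" using x0(1) by (simp add: dot_square_norm)
  have ray: "e * (x \<bullet> x) \<le> x \<bullet> f x" for x
  proof (cases "x = 0")
    case True then show ?thesis using lin by (simp add: linear_0)
  next
    case False
    define u where "u = (1 / norm x) *\<^sub>R x"
    have "u \<in> sphere 0 1" using False by (simp add: u_def)
    then have "e \<le> u \<bullet> f u" using x0 e_def by auto
    also have "u \<bullet> f u = (x \<bullet> f x) / (norm x)^2"
      using lin by (simp add: u_def linear_scale power2_eq_square)
    finally have "e * (norm x)^2 \<le> x \<bullet> f x" using False by (simp add: field_simps)
    then show ?thesis by (simp add: dot_square_norm)
  qed
  define g where "g x = f x - e *\<^sub>R x" for x
  have glin: "linear g"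
    by (rule linearI) (simp_all add: g_def linear_add[OF lin] linear_scale[OF lin] algebra_simps)
  have gsa: "inner x (g y) = inner (g x) y" for x y
    using sa[of x y] by (simp add: g_def inner_diff_left inner_diff_right inner_commute)
  have gpos: "0 \<le> y \<bullet> g y" for y using ray[of y] by (simp add: g_def inner_diff_right)
  have g0: "x0 \<bullet> g x0 = 0" using x0n by (simp add: g_def e_def inner_diff_right)
  have gy: "y \<bullet> g x0 = 0" for y
  proof (rule ccontr)
    assume c0: "y \<bullet> g x0 \<noteq> 0"
    define c where "c = y \<bullet> g x0"
    define q where "q = y \<bullet> g y"
    define t where "t = - c / (q + 1)"
    have q0: "q \<ge> 0" using gpos q_def by simp
    have "0 \<le> (x0 + t *\<^sub>R y) \<bullet> g (x0 + t *\<^sub>R y)" by (rule gpos)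
    also have "\<dots> = 2 * t * c + t^2 * q"
      using glin gsa[of x0 y] g0
      by (simp add: linear_add linear_scale inner_add_left inner_add_right c_def q_def
          power2_eq_square inner_commute algebra_simps)
    finally have A: "0 \<le> 2 * t * c + t^2 * q" .
    have qq: "q + 1 > 0" using q0 by simp
    have tq: "t * (q + 1) = - c" using qq by (simp add: t_def)
    have B: "t^2 * q \<le> t^2 * (q + 1)" by (rule mult_left_mono) auto
    have C: "t^2 * (q + 1) = - (t * c)"
      by (metis tq mult.assoc mult_minus_right power2_eq_square)
    have "t * c = - (c * c) / (q + 1)" by (simp add: t_def)
    moreover have "c * c > 0" using c0 c_def linorder_neqE_linordered_idom[of c 0] mult_neg_neg[of c c] mult_pos_pos[of c c] by blast
    ultimately have D: "t * c < 0" using qq by (simp add: divide_pos_pos)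
    show False using A B C D by linarith
  qed
  have "g x0 \<bullet> g x0 = 0" using gy by blast
  then have "f x0 = e *\<^sub>R x0" by (simp add: g_def)
  moreover have "x0 \<noteq> 0" using x0n by auto
  ultimately show ?thesis using ray by blast
qed

lemma selfadj_norm_bound:
  fixes g :: "'a::euclidean_space \<Rightarrow> 'a"
  assumes lin: "linear g" and sa: "\<And>x y. inner x (g y) = inner (g x) y"
    and bd: "\<And>x. \<bar>x \<bullet> g x\<bar> \<le> \<rho> * (x \<bullet> x)"
  shows "norm (g v) \<le> \<rho> * norm v"
proof (cases "g v = 0")
  case True
  have "0 \<le> \<rho> * (v \<bullet> v)" using bd[of v] by linarith
  then have "0 \<le> \<rho> \<or> v = 0"
  proof (cases "v = 0")
    case False then have "v \<bullet> v > 0" by simp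
    then show ?thesis using \<open>0 \<le> \<rho> * (v \<bullet> v)\<close> mult_neg_pos[of \<rho> "v \<bullet> v"] by linarith
  qed simp
  then show ?thesis using True by auto
next
  case False
  define q where "q = norm (g v)"
  define n where "n = norm v"
  have q0: "q > 0" using False q_def by simp
  have n0: "n > 0" using False lin n_def by (auto simp: linear_0)
  have pol: "4 * (x \<bullet> g y) \<le> 2 * \<rho> * (x \<bullet> x + y \<bullet> y)" for x y
  proof -
    have e1: "(x + y) \<bullet> g (x + y) = x \<bullet> g x + 2 * (x \<bullet> g y) + y \<bullet> g y"
      using lin sa[of y x] by (simp add: linear_add inner_add_left inner_add_right inner_commute)
    have e2: "(x - y) \<bullet> g (x - y) = x \<bullet> g x - 2 * (x \<bullet> g y) + y \<bullet> g y"
      using lin sa[of y x] by (simp add: linear_diff inner_diff_left inner_diff_right inner_commute)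
    have "4 * (x \<bullet> g y) = (x + y) \<bullet> g (x + y) - (x - y) \<bullet> g (x - y)" using e1 e2 by simp
    also have "\<dots> \<le> \<rho> * ((x+y) \<bullet> (x+y)) + \<rho> * ((x-y) \<bullet> (x-y))"
      using bd[of "x+y"] bd[of "x-y"] by linarith
    also have "\<dots> = 2 * \<rho> * (x \<bullet> x + y \<bullet> y)"
      by (simp add: inner_add_left inner_add_right inner_diff_left inner_diff_right inner_commute algebra_simps)
    finally show ?thesis .
  qed
  define s where "s = n / q"
  have "4 * ((s *\<^sub>R g v) \<bullet> g v) \<le> 2 * \<rho> * ((s *\<^sub>R g v) \<bullet> (s *\<^sub>R g v) + v \<bullet> v)" by (rule pol)
  then have "4 * s * q^2 \<le> 2 * \<rho> * (s^2 * q^2 + n^2)"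
    by (simp add: q_def n_def dot_square_norm power2_eq_square algebra_simps)
  also have "s^2 * q^2 = n^2" using q0 by (simp add: s_def field_simps)
  finally have "4 * n * q \<le> 4 * \<rho> * n^2" using q0 by (simp add: s_def field_simps power2_eq_square)
  then have "q \<le> \<rho> * n" using n0 by (simp add: power2_eq_square)
  then show ?thesis by (simp add: q_def n_def)
qed


lemma sym_inner:
  fixes P :: "real^'n::finite^'n"
  assumes "symmetric_matrix P"
  shows "inner x (P *v y) = inner (P *v x) y"
proof -
  have "inner x (P *v y) = inner (x v* P) y" by (simp add: dot_lmul_matrix)
  also have "x v* P = transpose P *v x" by simp
  also have "\<dots> = P *v x" using assms by (simp add: symmetric_matrix_def)
  finally show ?thesis .
qed

lemma eig_finite:
  fixes P :: "real^'n::finite^'n"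
  assumes sym: "symmetric_matrix P"
  shows "finite (eigenvalues P)"
proof -
  define ev where "ev e = (SOME v. v \<noteq> 0 \<and> P *v v = e *\<^sub>R v)" for e
  have ev: "ev e \<noteq> 0 \<and> P *v ev e = e *\<^sub>R ev e" if "e \<in> eigenvalues P" for e
  proof -
    have "\<exists>v. v \<noteq> 0 \<and> P *v v = e *\<^sub>R v" using that unfolding eigenvalues_def by simp
    then show ?thesis unfolding ev_def by (rule someI_ex)
  qed
  have inj: "inj_on ev (eigenvalues P)"
  proof (rule inj_onI)
    fix e e' assume h: "e \<in> eigenvalues P" "e' \<in> eigenvalues P" "ev e = ev e'"
    have "e *\<^sub>R ev e = P *v ev e" using ev[OF h(1)] by simp
    also have "\<dots> = P *v ev e'" using h(3) by simp
    also have "\<dots> = e' *\<^sub>R ev e'" using ev[OF h(2)] by simp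
    also have "\<dots> = e' *\<^sub>R ev e" using h(3) by simp
    finally have "e *\<^sub>R ev e = e' *\<^sub>R ev e" .
    then show "e = e'" using ev[OF h(1)] by simp
  qed
  have "pairwise orthogonal (ev ` eigenvalues P)"
  proof (rule pairwiseI)
    fix u v assume "u \<in> ev ` eigenvalues P" "v \<in> ev ` eigenvalues P" "u \<noteq> v"
    then obtain e e' where h: "e \<in> eigenvalues P" "e' \<in> eigenvalues P" "u = ev e" "v = ev e'"
      by blast
    then have h5: "e \<noteq> e'" using \<open>u \<noteq> v\<close> by blast
    have "e * (u \<bullet> v) = (P *v u) \<bullet> v" using ev[OF h(1)] h(3) by simp
    also have "\<dots> = u \<bullet> (P *v v)" using sym_inner[OF sym] by simp
    also have "\<dots> = e' * (u \<bullet> v)" using ev[OF h(2)] h(4) by simp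
    finally show "orthogonal u v" using h5 by (simp add: orthogonal_def)
  qed
  moreover have "0 \<notin> ev ` eigenvalues P" using ev by force
  ultimately have "independent (ev ` eigenvalues P)" by (rule pairwise_orthogonal_independent)
  then have "finite (ev ` eigenvalues P)" using independent_bound by blast
  then show ?thesis using inj finite_imageD by blast
qed

lemma lower_bound:
  fixes P :: "real^'n::finite^'n"
  assumes sym: "symmetric_matrix P" and ne: "eigenvalues P \<noteq> {}"
  shows "lambda_min P \<in> eigenvalues P" "lambda_min P * (x \<bullet> x) \<le> x \<bullet> (P *v x)"
proof -
  show mem: "lambda_min P \<in> eigenvalues P" unfolding lambda_min_def using eig_finite[OF sym] ne by simp
  obtain e v where ev: "v \<noteq> 0" "P *v v = e *\<^sub>R v" "\<And>x. e * (x \<bullet> x) \<le> x \<bullet> (P *v x)"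
    using rayleigh_min[of "\<lambda>x. P *v x"] sym_inner[OF sym] by auto
  have "e \<in> eigenvalues P" using ev unfolding eigenvalues_def by auto
  then have "lambda_min P \<le> e" unfolding lambda_min_def using eig_finite[OF sym] by simp
  then show "lambda_min P * (x \<bullet> x) \<le> x \<bullet> (P *v x)"
    using ev(3)[of x] mult_right_mono[of "lambda_min P" e "x \<bullet> x"] by simp
qed

lemma upper_bound:
  fixes P :: "real^'n::finite^'n"
  assumes sym: "symmetric_matrix P" and sc: "spectral_condition P"
  shows "x \<bullet> (P *v x) \<le> x \<bullet> x"
proof -
  obtain e v where ev: "v \<noteq> 0" "- (P *v v) = e *\<^sub>R v" "\<And>x. e * (x \<bullet> x) \<le> x \<bullet> (- (P *v x))"
    using rayleigh_min[of "\<lambda>x. - (P *v x)"] sym_inner[OF sym] by (auto simp: linear_compose_neg)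
  have "P *v v = (-e) *\<^sub>R v" using ev(2) by (metis minus_minus scaleR_minus_left)
  then have "-e \<in> eigenvalues P" using ev(1) unfolding eigenvalues_def by auto
  then have "-e \<le> 1" using sc unfolding spectral_condition_def by auto
  then have "x \<bullet> (P *v x) \<le> (-e) * (x \<bullet> x)" using ev(3)[of x] by simp
  also have "\<dots> \<le> x \<bullet> x" using \<open>-e \<le> 1\<close> mult_right_mono[of "-e" 1 "x \<bullet> x"] by simp
  finally show ?thesis .
qed

lemma lmin_lt1:
  fixes P :: "real^'n::finite^'n"
  assumes sym: "symmetric_matrix P" and sc: "spectral_condition P" and N: "CARD('n) \<ge> 2"
  shows "lambda_min P < 1"
proof (rule ccontr)
  assume "\<not> lambda_min P < 1"
  have ne: "eigenvalues P \<noteq> {}" using sc unfolding spectral_condition_def by auto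
  have "lambda_min P \<le> 1" using lower_bound(1)[OF sym ne] sc unfolding spectral_condition_def by auto
  with \<open>\<not> lambda_min P < 1\<close> have l1: "lambda_min P = 1" by simp
  define g where "g x = P *v x - x" for x
  have glin: "linear g" unfolding g_def by (intro linear_compose_sub) (auto intro: bounded_linear.linear[OF bounded_linear_ident])
  have gsa: "inner x (g y) = inner (g x) y" for x y
    using sym_inner[OF sym, of x y] by (simp add: g_def inner_diff_left inner_diff_right inner_commute)
  have "\<bar>x \<bullet> g x\<bar> \<le> 0 * (x \<bullet> x)" for x
    using lower_bound(2)[OF sym ne, of x] upper_bound[OF sym sc, of x] l1
    by (simp add: g_def inner_diff_right)
  then have "norm (g v) \<le> 0 * norm v" for v by (rule selfadj_norm_bound[OF glin gsa])
  then have "P *v v = v" for v by (simp add: g_def)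
  then have "{v. P *v v = v} = UNIV" by auto
  then have "dim {v. P *v v = v} = CARD('n)" by (simp add: dimension_def)
  moreover have "dim {v. P *v v = v} = 1" using sc unfolding spectral_condition_def by blast
  ultimately show False using N by linarith
qed



lemma state_int:
  assumes "integrable M x0" "\<And>t. integrable M (r t)"
  shows "integrable M (state a x0 r t)"
  by (induction t) (auto intro!: Bochner_Integration.integrable_add integrable_mult_right assms)

lemma state_int_Suc:
  assumes "integrable M x0" "\<And>t. integrable M (r t)" "\<And>t. integral\<^sup>L M (r t) = 0"
  shows "integral\<^sup>L M (state a x0 r (Suc t)) = a * integral\<^sup>L M (state a x0 r t)"
  using state_int[OF assms(1,2)] assms by (simp add: Bochner_Integration.integral_add)

lemma int_lin:
  fixes A B C D R :: "_ \<Rightarrow> real"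
  assumes "integrable M A" "integrable M B" "integrable M C" "integrable M D" "integrable M R"
  shows "(\<integral>\<omega>. a * (A \<omega> + \<alpha> * (B \<omega> - C \<omega>)) - (a * D \<omega> + R \<omega>) \<partial>M)
      = a * (integral\<^sup>L M A + \<alpha> * (integral\<^sup>L M B - integral\<^sup>L M C)) - (a * integral\<^sup>L M D + integral\<^sup>L M R)"
proof -
  have e: "(\<lambda>\<omega>. a * (A \<omega> + \<alpha> * (B \<omega> - C \<omega>)) - (a * D \<omega> + R \<omega>))
     = (\<lambda>\<omega>. (a * A \<omega> + (a * \<alpha>) * B \<omega>) - ((a * \<alpha>) * C \<omega> + (a * D \<omega> + R \<omega>)))"
    by (rule ext) (simp add: right_diff_distrib distrib_left mult.assoc)
  have i1: "integrable M (\<lambda>\<omega>. a * A \<omega> + (a * \<alpha>) * B \<omega>)" using assms by auto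
  have i2: "integrable M (\<lambda>\<omega>. (a * \<alpha>) * C \<omega> + (a * D \<omega> + R \<omega>))" using assms by auto
  show ?thesis
    unfolding e
    apply (subst Bochner_Integration.integral_diff[OF i1 i2])
    apply (subst Bochner_Integration.integral_add, use assms in auto)+
    apply (simp add: algebra_simps)
    done
qed

lemma int_sum:
  assumes "\<And>j. integrable M (f j)"
  shows "(\<integral>\<omega>. (\<Sum>j\<in>S. (p j::real) * f j \<omega>) \<partial>M) = (\<Sum>j\<in>S. p j * integral\<^sup>L M (f j))"
  using assms by (subst Bochner_Integration.integral_sum) auto

lemma int_sum_int:
  assumes "\<And>j. integrable M (f j)"
  shows "integrable M (\<lambda>\<omega>. (\<Sum>j\<in>S. (p j::real) * f j \<omega>))"
  using assms by auto

context
  fixes P :: "real^'n::finite^'n" and a \<alpha> :: real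
    and M :: "'w measure" and x0 :: "'w \<Rightarrow> real"
    and r :: "nat \<Rightarrow> 'w \<Rightarrow> real" and w :: "'n \<Rightarrow> nat \<Rightarrow> 'w \<Rightarrow> real"
    and c :: "'w \<Rightarrow> real^'n"
  assumes x0: "integrable M x0"
    and ri: "\<And>t. integrable M (r t)" and r0: "\<And>t. integral\<^sup>L M (r t) = 0"
    and wi: "\<And>i t. integrable M (w i t)" and w0: "\<And>i t. integral\<^sup>L M (w i t) = 0"
    and ci: "\<And>i. integrable M (\<lambda>\<omega>. c \<omega> $ i)"
    and ds: "doubly_stochastic P"
begin

lemma obs_int: "integrable M (obs a x0 r w i t)"
  unfolding obs_def by (intro Bochner_Integration.integrable_add state_int x0 ri wi)

lemma obs_E: "integral\<^sup>L M (obs a x0 r w i t) = integral\<^sup>L M (state a x0 r t)"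
  unfolding obs_def using state_int[OF x0 ri] wi w0 by (simp add: Bochner_Integration.integral_add)

lemma hat_int: "integrable M (\<lambda>\<omega>. est_hat P a \<alpha> x0 r w c t \<omega> $ i)"
proof (induction t arbitrary: i)
  case 0 then show ?case using ci by simp
next
  case (Suc t) then show ?case
    using obs_int
    by (auto simp del: obs_def intro!: integrable_mult_right Bochner_Integration.integrable_add
        Bochner_Integration.integrable_diff Bochner_Integration.integrable_sum)
qed

lemma tilde_int: "integrable M (\<lambda>\<omega>. est_tilde P a \<alpha> x0 r w c t \<omega> $ i)"
proof (induction t arbitrary: i)
  case 0 then show ?case using ci by simp
next
  case (Suc t) then show ?case
    using obs_int
    by (auto simp del: obs_def intro!: integrable_mult_right Bochner_Integration.integrable_add
        Bochner_Integration.integrable_diff Bochner_Integration.integrable_sum)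
qed

lemma rowsum: "(\<Sum>j\<in>UNIV. P $ i $ j) = 1" using ds unfolding doubly_stochastic_def by blast

lemma hat_rec:
  defines "hm \<equiv> \<lambda>t. \<chi> i. integral\<^sup>L M (\<lambda>\<omega>. est_hat P a \<alpha> x0 r w c t \<omega> $ i - state a x0 r t \<omega>)"
  shows "hm (Suc t) = a *\<^sub>R (P *v hm t - \<alpha> *\<^sub>R hm t)"
proof -
  define X where "X = integral\<^sup>L M (state a x0 r t)"
  define E where "E j = integral\<^sup>L M (\<lambda>\<omega>. est_hat P a \<alpha> x0 r w c t \<omega> $ j)" for j
  have hmt: "hm t $ j = E j - X" for j
    unfolding hm_def E_def X_def using hat_int state_int[OF x0 ri] by simp
  have S: "(\<Sum>j\<in>UNIV. P $ i $ j * (E j - X)) = (\<Sum>j\<in>UNIV. P $ i $ j * E j) - X" for i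
    using rowsum[of i] by (simp add: right_diff_distrib sum_subtractf sum_distrib_right[symmetric])
  show ?thesis
  proof (rule iffD2[OF vec_eq_iff], rule allI)
    fix i
    have "hm (Suc t) $ i = a * ((\<Sum>j\<in>UNIV. P $ i $ j * E j) + \<alpha> * (X - E i)) - a * X"
      unfolding hm_def E_def X_def
      apply (simp del: obs_def)
      apply (subst int_lin)
      using hat_int obs_int state_int[OF x0 ri] ri
      apply (auto simp del: obs_def intro!: int_sum_int)[5]
      using hat_int obs_E r0 by (simp del: obs_def add: int_sum)
    also have "\<dots> = a * ((P *v hm t) $ i - \<alpha> * hm t $ i)"
    proof -
      have "(P *v hm t) $ i = (\<Sum>j\<in>UNIV. P $ i $ j * E j) - X"
        unfolding matrix_vector_mult_def using S[of i] by (simp add: hmt)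
      then show ?thesis using hmt[of i] by (simp only:) (simp add: algebra_simps)
    qed
    also have "\<dots> = (a *\<^sub>R (P *v hm t - \<alpha> *\<^sub>R hm t)) $ i" by simp
    finally show "hm (Suc t) $ i = (a *\<^sub>R (P *v hm t - \<alpha> *\<^sub>R hm t)) $ i" .
  qed
qed

lemma tilde_rec:
  defines "hm \<equiv> \<lambda>t. \<chi> i. integral\<^sup>L M (\<lambda>\<omega>. est_tilde P a \<alpha> x0 r w c t \<omega> $ i - state a x0 r t \<omega>)"
  shows "hm (Suc t) = a *\<^sub>R (P *v hm t - \<alpha> *\<^sub>R hm t)"
proof -
  define X where "X = integral\<^sup>L M (state a x0 r t)"
  define E where "E j = integral\<^sup>L M (\<lambda>\<omega>. est_tilde P a \<alpha> x0 r w c t \<omega> $ j)" for j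
  have hmt: "hm t $ j = E j - X" for j
    unfolding hm_def E_def X_def using tilde_int state_int[OF x0 ri] by simp
  have S: "(\<Sum>j\<in>UNIV. P $ i $ j * (E j - X)) = (\<Sum>j\<in>UNIV. P $ i $ j * E j) - X" for i
    using rowsum[of i] by (simp add: right_diff_distrib sum_subtractf sum_distrib_right[symmetric])
  have S2: "(\<Sum>j\<in>UNIV. P $ i $ j * X) = X" for i
    using rowsum[of i] by (simp add: sum_distrib_right[symmetric])
  show ?thesis
  proof (rule iffD2[OF vec_eq_iff], rule allI)
    fix i
    have "hm (Suc t) $ i = a * ((\<Sum>j\<in>UNIV. P $ i $ j * E j) + \<alpha> * ((\<Sum>j\<in>UNIV. P $ i $ j * X) - E i)) - a * X"
      unfolding hm_def E_def X_def
      apply (simp del: obs_def)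
      apply (subst int_lin)
      using tilde_int obs_int state_int[OF x0 ri] ri
      apply (auto simp del: obs_def intro!: int_sum_int)[5]
      using tilde_int obs_E r0 by (simp del: obs_def add: int_sum obs_int)
    also have "\<dots> = a * ((P *v hm t) $ i - \<alpha> * hm t $ i)"
    proof -
      have "(P *v hm t) $ i = (\<Sum>j\<in>UNIV. P $ i $ j * E j) - X"
        unfolding matrix_vector_mult_def using S[of i] by (simp add: hmt)
      then show ?thesis using hmt[of i] S2[of i] by (simp only:) (simp add: algebra_simps)
    qed
    also have "\<dots> = (a *\<^sub>R (P *v hm t - \<alpha> *\<^sub>R hm t)) $ i" by simp
    finally show "hm (Suc t) $ i = (a *\<^sub>R (P *v hm t - \<alpha> *\<^sub>R hm t)) $ i" .
  qed
qed

end

lemma mid_abs: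
  fixes p q m :: real
  assumes "m \<le> p" "p \<le> q"
  shows "\<bar>p - (q + m) / 2\<bar> \<le> (q - m) / 2"
proof (rule abs_leI)
  show "p - (q + m) / 2 \<le> (q - m) / 2" using assms by (simp add: field_simps)
  show "- (p - (q + m) / 2) \<le> (q - m) / 2" using assms by (simp add: field_simps)
qed

lemma decay:
  fixes h :: "nat \<Rightarrow> real^'n::finite"
  assumes G: "\<And>u. norm (G u) \<le> k * norm u" and k: "0 \<le> k" "k < 1"
    and rec: "\<And>t. h (Suc t) = G (h t)"
  shows "(\<lambda>t. h t $ i) \<longlonglongrightarrow> 0"
proof -
  have nb: "norm (h t) \<le> k ^ t * norm (h 0)" for t
  proof (induction t)
    case 0 then show ?case by simp
  next
    case (Suc t)
    have "norm (h (Suc t)) \<le> k * norm (h t)" using G rec by simp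
    also have "\<dots> \<le> k * (k ^ t * norm (h 0))" using Suc k by (intro mult_left_mono) auto
    finally show ?case by simp
  qed
  show ?thesis
  proof (rule Lim_null_comparison)
    show "\<forall>\<^sub>F t in sequentially. norm (h t $ i) \<le> k ^ t * norm (h 0)"
    proof (rule always_eventually, rule allI)
      fix t
      have "norm (h t $ i) \<le> norm (h t)" using component_le_norm_cart[of "h t" i] by simp
      then show "norm (h t $ i) \<le> k ^ t * norm (h 0)" using nb[of t] by linarith
    qed
    show "(\<lambda>t. k ^ t * norm (h 0)) \<longlonglongrightarrow> 0"
      using k by (intro tendsto_mult_left_zero LIMSEQ_power_zero) auto
  qed
qed

lemma geom_to_zero:
  fixes k :: real
  assumes "(\<lambda>t. k ^ t) \<longlonglongrightarrow> 0"
  shows "\<bar>k\<bar> < 1"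
proof (rule ccontr)
  assume "\<not> \<bar>k\<bar> < 1"
  then have "1 \<le> \<bar>k ^ t\<bar>" for t by (simp add: power_abs one_le_power)
  moreover obtain no where "\<forall>n\<ge>no. norm (k ^ n - 0) < 1"
    using assms[unfolded LIMSEQ_iff] zero_less_one by blast
  ultimately have "1 \<le> \<bar>k ^ no\<bar>" "\<bar>k ^ no\<bar> < 1" by auto
  then show False by linarith
qed

theorem proposition1:
  fixes P :: "real^'n::finite^'n" and a :: real
    and M :: "'w measure" and x0 :: "'w \<Rightarrow> real"
    and r :: "nat \<Rightarrow> 'w \<Rightarrow> real" and w :: "'n \<Rightarrow> nat \<Rightarrow> 'w \<Rightarrow> real"
  assumes "CARD('n) \<ge> 2"
    and "symmetric_matrix P" and "doubly_stochastic P" and "spectral_condition P"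
    and "prob_space M"
    and "integrable M x0"
    and "\<And>t. integrable M (r t)" and "\<And>t. integral\<^sup>L M (r t) = 0"
    and "\<And>i t. integrable M (w i t)" and "\<And>i t. integral\<^sup>L M (w i t) = 0"
  shows "(\<exists>\<alpha>. 0 < \<alpha> \<and> \<alpha> \<le> 1 \<and> asymp_unbiased M P a x0 r w \<alpha>)
           \<longleftrightarrow> \<bar>a\<bar> < 2 / (1 - lambda_min P)"
proof -
  note N = assms(1) and sym = assms(2) and ds = assms(3) and sc = assms(4) and ps = assms(5)
    and x0 = assms(6) and ri = assms(7) and r0 = assms(8) and wi = assms(9) and w0 = assms(10)
  have ne: "eigenvalues P \<noteq> {}" using sc unfolding spectral_condition_def by auto
  have one: "1 \<in> eigenvalues P" using sc unfolding spectral_condition_def by auto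
  have lmem: "lambda_min P \<in> eigenvalues P" by (rule lower_bound(1)[OF sym ne])
  have llow: "lambda_min P * (x \<bullet> x) \<le> x \<bullet> (P *v x)" for x by (rule lower_bound(2)[OF sym ne])
  have lup: "x \<bullet> (P *v x) \<le> x \<bullet> x" for x by (rule upper_bound[OF sym sc])
  have l1: "lambda_min P < 1" by (rule lmin_lt1[OF sym sc N])
  have lgt: "-1 < lambda_min P" using lmem sc unfolding spectral_condition_def by auto
  define G where "G \<alpha> v = a *\<^sub>R (P *v v - \<alpha> *\<^sub>R v)" for \<alpha> and v :: "real^'n"
  define hm where "hm \<alpha> c t = (\<chi> i. integral\<^sup>L M (\<lambda>\<omega>. est_hat P a \<alpha> x0 r w c t \<omega> $ i - state a x0 r t \<omega>))"
    for \<alpha> c t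
  define tm where "tm \<alpha> c t = (\<chi> i. integral\<^sup>L M (\<lambda>\<omega>. est_tilde P a \<alpha> x0 r w c t \<omega> $ i - state a x0 r t \<omega>))"
    for \<alpha> c t
  have hrec: "hm \<alpha> c (Suc t) = G \<alpha> (hm \<alpha> c t)" if "\<And>i. integrable M (\<lambda>\<omega>. c \<omega> $ i)" for \<alpha> c t
    unfolding hm_def G_def by (rule hat_rec[OF x0 ri r0 wi w0 that ds])
  have trec: "tm \<alpha> c (Suc t) = G \<alpha> (tm \<alpha> c t)" if "\<And>i. integrable M (\<lambda>\<omega>. c \<omega> $ i)" for \<alpha> c t
    unfolding tm_def G_def by (rule tilde_rec[OF x0 ri r0 wi w0 that ds])
  have AU: "asymp_unbiased M P a x0 r w \<alpha> \<longleftrightarrow>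
     (\<forall>c. (\<forall>i. integrable M (\<lambda>\<omega>. c \<omega> $ i)) \<longrightarrow>
        (\<forall>i. (\<lambda>t. hm \<alpha> c t $ i) \<longlonglongrightarrow> 0 \<and> (\<lambda>t. tm \<alpha> c t $ i) \<longlonglongrightarrow> 0))" for \<alpha>
    unfolding asymp_unbiased_def hm_def tm_def by simp
  show ?thesis
  proof
    assume "\<exists>\<alpha>. 0 < \<alpha> \<and> \<alpha> \<le> 1 \<and> asymp_unbiased M P a x0 r w \<alpha>"
    then obtain \<alpha> where \<alpha>: "0 < \<alpha>" "\<alpha> \<le> 1" and au: "asymp_unbiased M P a x0 r w \<alpha>" by blast
    have key: "\<bar>a * (e - \<alpha>)\<bar> < 1" if e: "e \<in> eigenvalues P" for e
    proof -
      obtain v where v: "v \<noteq> 0" "P *v v = e *\<^sub>R v" using e unfolding eigenvalues_def by auto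
      define X where "X = integral\<^sup>L M x0"
      define c where "c = (\<lambda>\<omega>::'w. v + X *\<^sub>R (\<chi> i. (1::real)))"
      interpret prob_space M by (rule ps)
      have ci: "integrable M (\<lambda>\<omega>. c \<omega> $ i)" for i by (simp add: c_def)
      have h0: "hm \<alpha> c 0 = v"
        unfolding hm_def c_def using x0 by (simp add: vec_eq_iff X_def prob_space)
      define k where "k = a * (e - \<alpha>)"
      have ht: "hm \<alpha> c t = k ^ t *\<^sub>R v" for t
      proof (induction t)
        case 0 then show ?case using h0 by simp
      next
        case (Suc t)
        have "hm \<alpha> c (Suc t) = G \<alpha> (hm \<alpha> c t)" by (rule hrec[OF ci])
        also have "\<dots> = (a * (k ^ t * e)) *\<^sub>R v - (a * (\<alpha> * k ^ t)) *\<^sub>R v"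
          using Suc.IH v(2) by (simp add: G_def matrix_vector_mult_scaleR scaleR_diff_right)
        also have "\<dots> = ((a * (e - \<alpha>)) * k ^ t) *\<^sub>R v"
          by (simp only: scaleR_diff_left[symmetric]) (simp only: algebra_simps)
        also have "\<dots> = k ^ Suc t *\<^sub>R v" by (simp only: k_def[symmetric] power_Suc)
        finally show ?case .
      qed
      obtain i where vi: "v $ i \<noteq> 0" using v(1) by (auto simp: vec_eq_iff)
      have "(\<lambda>t. hm \<alpha> c t $ i) \<longlonglongrightarrow> 0" using au ci unfolding AU by blast
      then have "(\<lambda>t. k ^ t * v $ i) \<longlonglongrightarrow> 0" by (simp add: ht)
      then have "(\<lambda>t. k ^ t * v $ i * (1 / v $ i)) \<longlonglongrightarrow> 0 * (1 / v $ i)" by (rule tendsto_mult_right)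
      then have "(\<lambda>t. k ^ t) \<longlonglongrightarrow> 0" using vi by simp
      then show ?thesis using geom_to_zero k_def by blast
    qed
    have k1: "\<bar>a * (1 - \<alpha>)\<bar> < 1" using key[OF one] .
    have k2: "\<bar>a * (lambda_min P - \<alpha>)\<bar> < 1" using key[OF lmem] .
    have "\<bar>a\<bar> * (1 - lambda_min P) = \<bar>a * (1 - \<alpha>) - a * (lambda_min P - \<alpha>)\<bar>"
    proof -
      have "a * (1 - \<alpha>) - a * (lambda_min P - \<alpha>) = a * (1 - lambda_min P)" by (simp add: algebra_simps)
      then show ?thesis using l1 by (simp add: abs_mult)
    qed
    also have "\<dots> \<le> \<bar>a * (1 - \<alpha>)\<bar> + \<bar>a * (lambda_min P - \<alpha>)\<bar>" by (rule abs_triangle_ineq4)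
    finally have "\<bar>a\<bar> * (1 - lambda_min P) < 2" using k1 k2 by linarith
    then show "\<bar>a\<bar> < 2 / (1 - lambda_min P)" using l1 by (simp add: pos_less_divide_eq)
  next
    assume A: "\<bar>a\<bar> < 2 / (1 - lambda_min P)"
    define \<alpha> where "\<alpha> = (1 + lambda_min P) / 2"
    define k where "k = \<bar>a\<bar> * (1 - lambda_min P) / 2"
    have k0: "0 \<le> k" using l1 by (simp add: k_def)
    have k1: "k < 1" using A l1 by (simp add: k_def pos_less_divide_eq)
    have Glin: "linear (G \<alpha>)"
      by (rule linearI) (simp_all add: G_def matrix_vector_right_distrib matrix_vector_mult_scaleR algebra_simps)
    have Gsa: "inner x (G \<alpha> y) = inner (G \<alpha> x) y" for x y
      using sym_inner[OF sym, of x y]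
      by (simp add: G_def inner_diff_left inner_diff_right inner_commute)
    have Gbd: "\<bar>x \<bullet> G \<alpha> x\<bar> \<le> k * (x \<bullet> x)" for x
    proof -
      have xx: "0 \<le> x \<bullet> x" by simp
      have gx: "x \<bullet> G \<alpha> x = a * (x \<bullet> (P *v x) - \<alpha> * (x \<bullet> x))" by (simp add: G_def inner_diff_right)
      have h2: "\<bar>x \<bullet> (P *v x) - \<alpha> * (x \<bullet> x)\<bar> \<le> (1 - lambda_min P) / 2 * (x \<bullet> x)"
      proof -
        have e1: "\<alpha> * (x \<bullet> x) = (x \<bullet> x + lambda_min P * (x \<bullet> x)) / 2" by (simp add: \<alpha>_def algebra_simps)
        have e2: "(1 - lambda_min P) / 2 * (x \<bullet> x) = (x \<bullet> x - lambda_min P * (x \<bullet> x)) / 2"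
          by (simp add: algebra_simps)
        show ?thesis unfolding e1 e2 by (rule mid_abs[OF llow[of x] lup[of x]])
      qed
      have "\<bar>x \<bullet> G \<alpha> x\<bar> = \<bar>a\<bar> * \<bar>x \<bullet> (P *v x) - \<alpha> * (x \<bullet> x)\<bar>" unfolding gx by (rule abs_mult)
      also have "\<dots> \<le> \<bar>a\<bar> * ((1 - lambda_min P) / 2 * (x \<bullet> x))" by (rule mult_left_mono[OF h2 abs_ge_zero])
      also have "\<dots> = k * (x \<bullet> x)" by (simp add: k_def)
      finally show ?thesis .
    qed
    have Gn: "norm (G \<alpha> u) \<le> k * norm u" for u by (rule selfadj_norm_bound[OF Glin Gsa Gbd])
    have "asymp_unbiased M P a x0 r w \<alpha>"
      unfolding AU
    proof (intro allI impI conjI)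
      fix c :: "'w \<Rightarrow> real^'n" and i assume ci: "\<forall>i. integrable M (\<lambda>\<omega>. c \<omega> $ i)"
      have rr: "hm \<alpha> c (Suc t) = G \<alpha> (hm \<alpha> c t)" for t by (rule hrec) (use ci in blast)
      show "(\<lambda>t. hm \<alpha> c t $ i) \<longlonglongrightarrow> 0"
        by (rule decay[where G="G \<alpha>" and k=k and h="hm \<alpha> c" and i=i, OF Gn k0 k1 rr])
      have rr: "tm \<alpha> c (Suc t) = G \<alpha> (tm \<alpha> c t)" for t by (rule trec) (use ci in blast)
      show "(\<lambda>t. tm \<alpha> c t $ i) \<longlonglongrightarrow> 0"
        by (rule decay[where G="G \<alpha>" and k=k and h="tm \<alpha> c" and i=i, OF Gn k0 k1 rr])
    qed
    moreover have "0 < \<alpha>" "\<alpha> \<le> 1" using lgt l1 by (auto simp: \<alpha>_def)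
    ultimately show "\<exists>\<alpha>. 0 < \<alpha> \<and> \<alpha> \<le> 1 \<and> asymp_unbiased M P a x0 r w \<alpha>" by blast
  qed
qed

end
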